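(* Under exactly the hypotheses of the preceding theorem (constants $c\in(0,1)$, $C\ge1$ with $|K^{(n)}_w(i)|\le C\binom nw(1-\frac{2w}{n})^i$ for all $n\ge1$, $0\le w\le cn$, $0\le i\le n/2$; a binary linear $[n,k]$ code $\mathcal{C}$ with $1\le k\le n-1$, generator matrix $G$ of rank $k$, dual distance $d^\perp$, $t^\perp=\lfloor (d^\perp-1)/2\rfloor$; an integer $0\le w\le cn$; $\varepsilon>0$; and a random vector $Z$ on $\mathbb{F}_2^n$ with $d_{TV}(P_{GZ},P_{U_k})\le\varepsilon$), the average absolute bias over all vectors of weight $w$ satisfies $$\frac{1}{\binom nw}\sum_{e\in\mathbb{F}_2^n:|e|=w}|\mathrm{bias}(e^\intercal Z)|\le\sqrt{\frac{|\mathcal{C}^\perp|V_n(t^\perp)}{2^{n+1}}}+\frac{\sqrt{Cn}}{2}\left(1-\frac{2w}{n}\right)^{t^\perp/2}+\sqrt{\frac\varepsilon2}.$$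
   Context: Krawtchouk polynomial: $K^{(n)}_w(i)=\sum_{j=0}^w(-1)^j\binom ij\binom{n-i}{w-j}$. Dual distance $d^\perp$: minimum Hamming weight of a nonzero vector of $\mathcal{C}^\perp$. $V_n(t)=\sum_{j=0}^t\binom nj$. For a $\{0,1\}$-valued random variable $\xi$, $\mathrm{bias}(\xi)=\frac12-\Pr(\xi=1)$. $P_{U_k}$ is uniform on $\mathbb{F}_2^k$; $d_{TV}(P,Q)=\frac12\sum_x|P(x)-Q(x)|$. *)

theory Defs
  imports "HOL-Probability.Probability"
begin

text \<open>Vectors of F_2^n are modelled as functions nat => bool that vanish
  (are False) outside {0..<n}; True stands for 1.\<close>

definition vecs :: "nat \<Rightarrow> (nat \<Rightarrow> bool) set" where
  "vecs n = {v. \<forall>i. n \<le> i \<longrightarrow> \<not> v i}"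

definition hweight :: "nat \<Rightarrow> (nat \<Rightarrow> bool) \<Rightarrow> nat" where
  "hweight n v = card {i. i < n \<and> v i}"

definition ip :: "nat \<Rightarrow> (nat \<Rightarrow> bool) \<Rightarrow> (nat \<Rightarrow> bool) \<Rightarrow> bool" where
  "ip n x y = odd (card {i. i < n \<and> x i \<and> y i})"

text \<open>A k x n matrix over F_2 is G :: nat => nat => bool, entry (j,i) = G j i.
  Matrix-vector product G z (in F_2^k) and row combination x^T G (in F_2^n).\<close>
definition mulvec :: "nat \<Rightarrow> nat \<Rightarrow> (nat \<Rightarrow> nat \<Rightarrow> bool) \<Rightarrow> (nat \<Rightarrow> bool) \<Rightarrow> (nat \<Rightarrow> bool)" where
  "mulvec k n G z = (\<lambda>j. j < k \<and> odd (card {i. i < n \<and> G j i \<and> z i}))"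

definition vecmul :: "nat \<Rightarrow> nat \<Rightarrow> (nat \<Rightarrow> bool) \<Rightarrow> (nat \<Rightarrow> nat \<Rightarrow> bool) \<Rightarrow> (nat \<Rightarrow> bool)" where
  "vecmul k n x G = (\<lambda>i. i < n \<and> odd (card {j. j < k \<and> x j \<and> G j i}))"

definition rank_k :: "nat \<Rightarrow> nat \<Rightarrow> (nat \<Rightarrow> nat \<Rightarrow> bool) \<Rightarrow> bool" where
  "rank_k k n G = (\<forall>x\<in>vecs k. vecmul k n x G = (\<lambda>_. False) \<longrightarrow> x = (\<lambda>_. False))"

definition gen_code :: "nat \<Rightarrow> nat \<Rightarrow> (nat \<Rightarrow> nat \<Rightarrow> bool) \<Rightarrow> (nat \<Rightarrow> bool) set" where
  "gen_code k n G = (\<lambda>x. vecmul k n x G) ` vecs k"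

definition dual_code :: "nat \<Rightarrow> (nat \<Rightarrow> bool) set \<Rightarrow> (nat \<Rightarrow> bool) set" where
  "dual_code n Cd = {y \<in> vecs n. \<forall>c\<in>Cd. \<not> ip n c y}"

definition min_dist :: "nat \<Rightarrow> (nat \<Rightarrow> bool) set \<Rightarrow> nat" where
  "min_dist n Cd = Min (hweight n ` (Cd - {\<lambda>_. False}))"

definition krawtchouk :: "nat \<Rightarrow> nat \<Rightarrow> nat \<Rightarrow> int" where
  "krawtchouk n w i = (\<Sum>j=0..w. (-1)^j * int (i choose j) * int ((n - i) choose (w - j)))"

definition hamming_ball_vol :: "nat \<Rightarrow> nat \<Rightarrow> nat" where
  "hamming_ball_vol n t = (\<Sum>j=0..t. n choose j)"

definition bias :: "(nat \<Rightarrow> bool) pmf \<Rightarrow> ((nat \<Rightarrow> bool) \<Rightarrow> bool) \<Rightarrow> real" where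
  "bias Z f = 1/2 - measure_pmf.prob Z {z. f z}"

definition tv_uniform :: "nat \<Rightarrow> (nat \<Rightarrow> bool) pmf \<Rightarrow> real" where
  "tv_uniform k P = (1/2) * (\<Sum>x\<in>vecs k. \<bar>pmf P x - 1 / 2^k\<bar>)"

end

theory Submission
  imports Defs
begin


definition par :: "nat \<Rightarrow> (nat \<Rightarrow> bool) \<Rightarrow> bool" where
  "par n P = odd (card {i. i < n \<and> P i})"

lemma card_lt_Suc: "card {i. i < Suc n \<and> P i} = card {i. i < n \<and> P i} + (if P n then 1 else 0)"
proof -
  have "{i. i < Suc n \<and> P i} = {i. i < n \<and> P i} \<union> (if P n then {n} else {})"
    by (auto simp: less_Suc_eq)
  then show ?thesis by auto
qed

lemma par_0[simp]: "par 0 P = False" by (simp add: par_def)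
lemma par_Suc[simp]: "par (Suc n) P = (par n P \<noteq> P n)"
  by (simp add: par_def card_lt_Suc)

lemma par_xor: "par n (\<lambda>i. P i \<noteq> Q i) = (par n P \<noteq> par n Q)"
  by (induction n) auto

lemma par_false[simp]: "par n (\<lambda>_. False) = False"
  by (induction n) auto

lemma par_and_const: "par n (\<lambda>j. P j \<and> b) = (b \<and> par n P)"
  by (cases b) auto

lemma par_const_and: "par n (\<lambda>j. b \<and> P j) = (b \<and> par n P)"
  by (cases b) auto

lemma par_cong: "(\<And>i. i < n \<Longrightarrow> P i = Q i) \<Longrightarrow> par n P = par n Q"
  unfolding par_def by (metis (mono_tags, lifting) Collect_cong)

lemma par_swap: "par n (\<lambda>i. y i \<and> par k (\<lambda>j. A j i)) = par k (\<lambda>j. par n (\<lambda>i. A j i \<and> y i))"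
proof (induction n)
  case 0 then show ?case by simp
next
  case (Suc n)
  have "par k (\<lambda>j. par (Suc n) (\<lambda>i. A j i \<and> y i)) =
        (par k (\<lambda>j. par n (\<lambda>i. A j i \<and> y i)) \<noteq> par k (\<lambda>j. A j n \<and> y n))"
    by (simp only: par_Suc par_xor)
  then show ?case using Suc by (simp add: par_and_const)
qed

lemma ip_par: "ip n x y = par n (\<lambda>i. x i \<and> y i)" by (simp add: ip_def par_def)

lemma ip_swap:
  "ip n (vecmul k n x G) y = ip k x (mulvec k n G y)"
proof -
  have "ip n (vecmul k n x G) y = par n (\<lambda>i. y i \<and> par k (\<lambda>j. x j \<and> G j i))"
    unfolding ip_par vecmul_def par_def[symmetric] by (rule par_cong) auto
  also have "\<dots> = par k (\<lambda>j. par n (\<lambda>i. (x j \<and> G j i) \<and> y i))" by (rule par_swap)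
  also have "\<dots> = ip k x (mulvec k n G y)"
    unfolding ip_par mulvec_def par_def[symmetric]
    by (rule par_cong) (simp add: par_const_and conj_assoc)
  finally show ?thesis .
qed

definition toV :: "nat set \<Rightarrow> nat \<Rightarrow> bool" where "toV S = (\<lambda>i. i \<in> S)"
definition toS :: "nat \<Rightarrow> (nat \<Rightarrow> bool) \<Rightarrow> nat set" where "toS n v = {i. i < n \<and> v i}"

lemma bij_toV: "bij_betw toV (Pow {..<n}) (vecs n)"
proof (rule bij_betwI[where g = "toS n"])
  show "toV \<in> Pow {..<n} \<rightarrow> vecs n" by (auto simp: toV_def vecs_def)
  show "toS n \<in> vecs n \<rightarrow> Pow {..<n}" by (auto simp: toS_def)
  show "\<And>x. x \<in> Pow {..<n} \<Longrightarrow> toS n (toV x) = x" by (auto simp: toS_def toV_def)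
  show "\<And>y. y \<in> vecs n \<Longrightarrow> toV (toS n y) = y"
    by (auto simp: toS_def toV_def vecs_def fun_eq_iff) (meson not_le)
qed

lemma finite_vecs[simp]: "finite (vecs n)"
  using bij_betw_finite[OF bij_toV] by auto

lemma card_vecs: "card (vecs n) = 2 ^ n"
  using bij_betw_same_card[OF bij_toV, of n] by (simp add: card_Pow)

lemma hweight_toV: "S \<subseteq> {..<n} \<Longrightarrow> hweight n (toV S) = card S"
  unfolding hweight_def toV_def by (metis (no_types, lifting) Collect_cong lessThan_iff subsetD
     Collect_mem_eq subset_iff)

lemma toS_sub: "toS n v \<subseteq> {..<n}" by (auto simp: toS_def)
lemma hweight_toS: "hweight n v = card (toS n v)" by (simp add: hweight_def toS_def)
lemma toV_toS: "v \<in> vecs n \<Longrightarrow> toV (toS n v) = v"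
  using bij_toV[of n] by (auto simp: toS_def toV_def vecs_def fun_eq_iff) (meson not_le)

lemma image_toV_weight: "toV ` {S. S \<subseteq> {..<n} \<and> card S = j} = {e \<in> vecs n. hweight n e = j}"
proof
  show "toV ` {S. S \<subseteq> {..<n} \<and> card S = j} \<subseteq> {e \<in> vecs n. hweight n e = j}"
    using bij_toV[of n] by (auto simp: hweight_toV bij_betw_def)
  show "{e \<in> vecs n. hweight n e = j} \<subseteq> toV ` {S. S \<subseteq> {..<n} \<and> card S = j}"
  proof
    fix e assume e: "e \<in> {e \<in> vecs n. hweight n e = j}"
    then have "e = toV (toS n e)" by (simp add: toV_toS)
    moreover have "toS n e \<in> {S. S \<subseteq> {..<n} \<and> card S = j}" using e toS_sub hweight_toS by auto
    ultimately show "e \<in> toV ` {S. S \<subseteq> {..<n} \<and> card S = j}" by blast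
  qed
qed

lemma inj_toV: "inj_on toV A" by (auto simp: inj_on_def toV_def fun_eq_iff)

lemma card_weight: "card {e \<in> vecs n. hweight n e = j} = n choose j"
proof -
  have "card {e \<in> vecs n. hweight n e = j} = card {S. S \<subseteq> {..<n} \<and> card S = j}"
    unfolding image_toV_weight[symmetric] by (rule card_image[OF inj_toV])
  also have "\<dots> = n choose j" using n_subsets[of "{..<n}" j] by simp
  finally show ?thesis .
qed

definition chi :: "nat \<Rightarrow> (nat \<Rightarrow> bool) \<Rightarrow> (nat \<Rightarrow> bool) \<Rightarrow> real" where
  "chi n e y = (-1) ^ card {i. i < n \<and> e i \<and> y i}"

lemma card_split_count:
  assumes Y: "Y \<subseteq> {..<n}" and j: "j \<le> w"
  shows "card {S. (S \<subseteq> {..<n} \<and> card S = w) \<and> card (S \<inter> Y) = j}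
         = (card Y choose j) * ((n - card Y) choose (w - j))"
proof -
  let ?L = "{S. (S \<subseteq> {..<n} \<and> card S = w) \<and> card (S \<inter> Y) = j}"
  let ?A = "{A. A \<subseteq> Y \<and> card A = j}"
  let ?B = "{B. B \<subseteq> {..<n} - Y \<and> card B = w - j}"
  have fY: "finite Y" using Y finite_subset by blast
  have "bij_betw (\<lambda>S. (S \<inter> Y, S - Y)) ?L (?A \<times> ?B)"
  proof (rule bij_betwI[where g = "\<lambda>(A,B). A \<union> B"])
    show "(\<lambda>S. (S \<inter> Y, S - Y)) \<in> ?L \<rightarrow> ?A \<times> ?B"
    proof
      fix S assume S: "S \<in> ?L"
      then have "finite S" using finite_subset by blast
      then have "card S = card (S \<inter> Y) + card (S - Y)" by (rule card_Int_Diff)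
      then show "(S \<inter> Y, S - Y) \<in> ?A \<times> ?B" using S by auto
    qed
    show "(\<lambda>(A, B). A \<union> B) \<in> ?A \<times> ?B \<rightarrow> ?L"
    proof
      fix p assume p: "p \<in> ?A \<times> ?B"
      obtain A B where pAB: "p = (A, B)" by (cases p)
      have A: "A \<subseteq> Y" "card A = j" and B: "B \<subseteq> {..<n} - Y" "card B = w - j" using p pAB by auto
      have fA: "finite A" using A fY finite_subset by blast
      have fB: "finite B" using B finite_subset by blast
      have disj: "A \<inter> B = {}" using A B by auto
      have "card (A \<union> B) = w" using card_Un_disjoint[OF fA fB disj] A B j by simp
      moreover have "(A \<union> B) \<inter> Y = A" using A B by auto
      ultimately show "(case p of (A, B) \<Rightarrow> A \<union> B) \<in> ?L" using pAB A B Y by auto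
    qed
    show "\<And>S. S \<in> ?L \<Longrightarrow> (case (S \<inter> Y, S - Y) of (A, B) \<Rightarrow> A \<union> B) = S" by auto
    show "\<And>p. p \<in> ?A \<times> ?B \<Longrightarrow> (\<lambda>S. (S \<inter> Y, S - Y)) ((\<lambda>(A, B). A \<union> B) p) = p"
      by auto
  qed
  then have "card ?L = card (?A \<times> ?B)" by (rule bij_betw_same_card)
  also have "\<dots> = card ?A * card ?B" by (rule card_cartesian_product)
  also have "card ?A = card Y choose j" using n_subsets[OF fY] by simp
  also have "card ?B = card ({..<n} - Y) choose (w - j)" using n_subsets[of "{..<n} - Y"] by simp
  also have "card ({..<n} - Y) = n - card Y" using Y by (simp add: card_Diff_subset fY)
  finally show ?thesis .
qed

lemma kraw_sum:
  assumes y: "y \<in> vecs n"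
  shows "(\<Sum>e\<in>{e\<in>vecs n. hweight n e = w}. chi n e y) = real_of_int (krawtchouk n w (hweight n y))"
proof -
  define Y where "Y = toS n y"
  define SW where "SW = {S. S \<subseteq> {..<n} \<and> card S = w}"
  have Y: "Y \<subseteq> {..<n}" unfolding Y_def by (rule toS_sub)
  have hY: "hweight n y = card Y" by (simp add: Y_def hweight_toS)
  have fSW: "finite SW" unfolding SW_def
    by (rule finite_subset[of _ "Pow {..<n}"]) auto
  have "(\<Sum>e\<in>{e\<in>vecs n. hweight n e = w}. chi n e y) = (\<Sum>S\<in>SW. chi n (toV S) y)"
    unfolding image_toV_weight[symmetric] SW_def using sum.reindex[OF inj_toV] by (simp add: o_def)
  also have "\<dots> = (\<Sum>S\<in>SW. (-1) ^ card (S \<inter> Y))"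
  proof (rule sum.cong[OF refl])
    fix S assume "S \<in> SW"
    then have "{i. i < n \<and> toV S i \<and> y i} = S \<inter> Y" by (auto simp: SW_def toV_def Y_def toS_def)
    then show "chi n (toV S) y = (-1) ^ card (S \<inter> Y)" by (simp add: chi_def)
  qed
  also have "\<dots> = (\<Sum>j\<in>{0..w}. (\<Sum>S\<in>{S. S \<in> SW \<and> card (S \<inter> Y) = j}. (-1) ^ card (S \<inter> Y)))"
  proof (rule sum.group[symmetric, OF fSW])
    show "finite {0..w}" by simp
    show "(\<lambda>S. card (S \<inter> Y)) ` SW \<subseteq> {0..w}"
    proof
      fix x assume "x \<in> (\<lambda>S. card (S \<inter> Y)) ` SW"
      then obtain S where S: "S \<in> SW" "x = card (S \<inter> Y)" by blast
      have "finite S" using S SW_def finite_subset by blast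
      then have "card (S \<inter> Y) \<le> card S" by (simp add: card_mono)
      then show "x \<in> {0..w}" using S SW_def by auto
    qed
  qed
  also have "\<dots> = (\<Sum>j\<in>{0..w}. (-1) ^ j * (real (card Y choose j) * real ((n - card Y) choose (w - j))))"
  proof (rule sum.cong[OF refl])
    fix j assume j: "j \<in> {0..w}"
    have "(\<Sum>S\<in>{S. S \<in> SW \<and> card (S \<inter> Y) = j}. (-1::real) ^ card (S \<inter> Y))
        = (\<Sum>S\<in>{S. S \<in> SW \<and> card (S \<inter> Y) = j}. (-1) ^ j)" by simp
    also have "\<dots> = (-1) ^ j * real (card {S. S \<in> SW \<and> card (S \<inter> Y) = j})" by simp
    also have "card {S. S \<in> SW \<and> card (S \<inter> Y) = j} = (card Y choose j) * ((n - card Y) choose (w - j))"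
      using card_split_count[OF Y, of j w] j unfolding SW_def by simp
    finally show "(\<Sum>S\<in>{S. S \<in> SW \<and> card (S \<inter> Y) = j}. (-1::real) ^ card (S \<inter> Y))
       = (-1) ^ j * (real (card Y choose j) * real ((n - card Y) choose (w - j)))" by simp
  qed
  also have "\<dots> = real_of_int (krawtchouk n w (hweight n y))"
    unfolding krawtchouk_def hY by (simp add: mult.assoc)
  finally show ?thesis .
qed

definition xorv :: "(nat \<Rightarrow> bool) \<Rightarrow> (nat \<Rightarrow> bool) \<Rightarrow> nat \<Rightarrow> bool" where
  "xorv z y = (\<lambda>i. z i \<noteq> y i)"
definition complv :: "nat \<Rightarrow> (nat \<Rightarrow> bool) \<Rightarrow> nat \<Rightarrow> bool" where
  "complv n y = (\<lambda>i. i < n \<and> \<not> y i)"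

lemma xorv_vecs: "z \<in> vecs n \<Longrightarrow> y \<in> vecs n \<Longrightarrow> xorv z y \<in> vecs n"
  by (auto simp: xorv_def vecs_def)
lemma xorv_xorv[simp]: "xorv z (xorv z y) = y" by (auto simp: xorv_def fun_eq_iff)
lemma complv_vecs: "complv n y \<in> vecs n" by (auto simp: complv_def vecs_def)
lemma complv_complv: "y \<in> vecs n \<Longrightarrow> complv n (complv n y) = y"
  by (auto simp: complv_def vecs_def fun_eq_iff) (meson not_le)

lemma hweight_complv: "hweight n (complv n y) = n - hweight n y"
proof -
  have "toS n (complv n y) = {..<n} - toS n y" by (auto simp: toS_def complv_def)
  then show ?thesis by (simp add: hweight_toS card_Diff_subset toS_sub finite_subset[OF toS_sub])
qed

lemma chi_par: "chi n e y = (if par n (\<lambda>i. e i \<and> y i) then -1 else 1)"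
  by (simp add: chi_def par_def minus_one_power_iff)

lemma chi_mult: "chi n e z * chi n e z' = chi n e (xorv z z')"
proof -
  have "par n (\<lambda>i. e i \<and> xorv z z' i) = par n (\<lambda>i. (e i \<and> z i) \<noteq> (e i \<and> z' i))"
    by (rule par_cong) (auto simp: xorv_def)
  then have "par n (\<lambda>i. e i \<and> xorv z z' i) = (par n (\<lambda>i. e i \<and> z i) \<noteq> par n (\<lambda>i. e i \<and> z' i))"
    by (simp only: par_xor)
  then show ?thesis by (simp add: chi_par)
qed

lemma abs_chi[simp]: "\<bar>chi n e y\<bar> = 1" by (simp add: chi_par)

lemma chi_complv:
  assumes "hweight n e = w"
  shows "chi n e (complv n y) = (-1) ^ w * chi n e y"
proof -
  have "par n (\<lambda>i. e i \<and> complv n y i) = par n (\<lambda>i. e i \<noteq> (e i \<and> y i))"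
    by (rule par_cong) (auto simp: complv_def)
  also have "\<dots> = (par n e \<noteq> par n (\<lambda>i. e i \<and> y i))" by (rule par_xor)
  also have "par n e = odd w" using assms by (simp add: par_def hweight_def)
  finally show ?thesis by (simp add: chi_par minus_one_power_iff)
qed

definition Sfun :: "nat \<Rightarrow> nat \<Rightarrow> (nat \<Rightarrow> bool) \<Rightarrow> real" where
  "Sfun n w y = (\<Sum>e\<in>{e\<in>vecs n. hweight n e = w}. chi n e y)"

lemma Sfun_abs_le: "\<bar>Sfun n w y\<bar> \<le> real (n choose w)"
proof -
  have "\<bar>Sfun n w y\<bar> \<le> (\<Sum>e\<in>{e\<in>vecs n. hweight n e = w}. \<bar>chi n e y\<bar>)"
    unfolding Sfun_def by (rule sum_abs)
  also have "\<dots> = real (n choose w)" by (simp add: card_weight)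
  finally show ?thesis .
qed

lemma Sfun_complv: "Sfun n w (complv n y) = (-1) ^ w * Sfun n w y"
  unfolding Sfun_def sum_distrib_left by (rule sum.cong) (auto simp: chi_complv)

lemma Sfun_bound:
  fixes CC :: real
  assumes kraw: "\<And>i. 2 * i \<le> n \<Longrightarrow>
       \<bar>real_of_int (krawtchouk n w i)\<bar> \<le> CC * real (n choose w) * (1 - 2 * real w / real n) ^ i"
    and n: "n \<ge> 1" and wn: "w \<le> n"
    and y: "y \<in> vecs n" and t1: "t \<le> hweight n y" and t2: "t \<le> n - hweight n y"
    and CC: "CC \<ge> 0"
  shows "\<bar>Sfun n w y\<bar> \<le> CC * real (n choose w) * \<bar>1 - 2 * real w / real n\<bar> ^ t"
proof -
  define x where "x = 1 - 2 * real w / real n"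
  have ax: "\<bar>x\<bar> \<le> 1" using n wn unfolding x_def by (auto simp: abs_le_iff field_simps)
  have key: "\<bar>real_of_int (krawtchouk n w i)\<bar> \<le> CC * real (n choose w) * \<bar>x\<bar> ^ t"
    if "2 * i \<le> n" "t \<le> i" for i
  proof -
    have "x ^ i \<le> \<bar>x\<bar> ^ i" by (metis abs_ge_self power_abs)
    also have "\<dots> \<le> \<bar>x\<bar> ^ t" using ax that(2) by (simp add: power_decreasing)
    finally have "CC * real (n choose w) * x ^ i \<le> CC * real (n choose w) * \<bar>x\<bar> ^ t"
      using CC by (simp add: mult_left_mono)
    then show ?thesis using kraw[OF that(1)] unfolding x_def by linarith
  qed
  show ?thesis
  proof (cases "2 * hweight n y \<le> n")
    case True
    then show ?thesis using key[OF True t1] kraw_sum[OF y] unfolding Sfun_def x_def by simp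
  next
    case False
    have "\<bar>Sfun n w y\<bar> = \<bar>Sfun n w (complv n y)\<bar>" by (simp add: Sfun_complv abs_mult)
    also have "\<dots> = \<bar>real_of_int (krawtchouk n w (n - hweight n y))\<bar>"
      using kraw_sum[where y="complv n y" and n=n and w=w] complv_vecs[of n y] by (simp add: Sfun_def hweight_complv)
    also have "\<dots> \<le> CC * real (n choose w) * \<bar>x\<bar> ^ t" using False t2 by (intro key) auto
    finally show ?thesis unfolding x_def .
  qed
qed

lemma prob_sum:
  assumes "finite V" "set_pmf Z \<subseteq> V"
  shows "measure_pmf.prob Z A = sum (pmf Z) (A \<inter> V)"
proof -
  have "measure_pmf.prob Z A = measure_pmf.prob Z (A \<inter> set_pmf Z)" by (simp add: measure_Int_set_pmf)
  also have "A \<inter> set_pmf Z = (A \<inter> V) \<inter> set_pmf Z" using assms by auto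
  also have "measure_pmf.prob Z \<dots> = measure_pmf.prob Z (A \<inter> V)" by (simp add: measure_Int_set_pmf)
  also have "\<dots> = sum (pmf Z) (A \<inter> V)" using assms by (simp add: measure_measure_pmf_finite)
  finally show ?thesis .
qed

lemma bias_formula:
  assumes "set_pmf Z \<subseteq> vecs n"
  shows "bias Z (ip n e) = (1/2) * (\<Sum>z\<in>vecs n. pmf Z z * chi n e z)"
proof -
  let ?V = "vecs n"
  have s1: "sum (pmf Z) ?V = 1" using assms by (simp add: sum_pmf_eq_1)
  have chi_eq: "chi n e z = 1 - 2 * (if ip n e z then 1 else 0)" for z
    by (simp add: chi_par ip_par)
  have "(\<Sum>z\<in>?V. pmf Z z * chi n e z) = (\<Sum>z\<in>?V. pmf Z z) - 2 * (\<Sum>z\<in>?V. if ip n e z then pmf Z z else 0)"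
  proof -
    have "(\<Sum>z\<in>?V. pmf Z z * chi n e z) = (\<Sum>z\<in>?V. pmf Z z - 2 * (if ip n e z then pmf Z z else 0))"
      by (rule sum.cong) (auto simp: chi_eq)
    then show ?thesis by (simp add: sum_subtractf sum_distrib_left)
  qed
  also have "(\<Sum>z\<in>?V. if ip n e z then pmf Z z else 0) = sum (pmf Z) ({z. ip n e z} \<inter> ?V)"
    by (simp add: sum.inter_restrict[where A="?V" and B="{z. ip n e z}" and g="pmf Z"] Int_commute)
  also have "\<dots> = measure_pmf.prob Z {z. ip n e z}" using prob_sum[OF finite_vecs assms] by simp
  finally show ?thesis using s1 by (simp add: bias_def)
qed

lemma sum_xorv:
  assumes z: "z \<in> vecs n"
  shows "(\<Sum>y\<in>vecs n. g (xorv z y)) = (\<Sum>y\<in>vecs n. (g y :: real))"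
  by (rule sum.reindex_bij_witness[where i="xorv z" and j="xorv z"]) (auto simp: xorv_vecs z)

lemma square_expand:
  fixes f :: "(nat \<Rightarrow> bool) \<Rightarrow> real"
  assumes "True"
  shows "(\<Sum>e\<in>{e\<in>vecs n. hweight n e = w}. (\<Sum>z\<in>vecs n. f z * chi n e z)\<^sup>2)
        = (\<Sum>z\<in>vecs n. f z * (\<Sum>y\<in>vecs n. f (xorv z y) * Sfun n w y))"
proof -
  let ?E = "{e\<in>vecs n. hweight n e = w}" and ?V = "vecs n"
  have "(\<Sum>e\<in>?E. (\<Sum>z\<in>?V. f z * chi n e z)\<^sup>2)
      = (\<Sum>e\<in>?E. \<Sum>z\<in>?V. \<Sum>z'\<in>?V. f z * f z' * chi n e (xorv z z'))"
    by (simp add: power2_eq_square sum_product chi_mult[symmetric] mult_ac)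
  also have "\<dots> = (\<Sum>z\<in>?V. \<Sum>z'\<in>?V. \<Sum>e\<in>?E. f z * f z' * chi n e (xorv z z'))"
    by (simp add: sum.swap[of _ ?E] sum.swap[of _ ?E ?V])
  also have "\<dots> = (\<Sum>z\<in>?V. f z * (\<Sum>z'\<in>?V. f z' * Sfun n w (xorv z z')))"
    by (simp add: Sfun_def sum_distrib_left mult_ac)
  also have "\<dots> = (\<Sum>z\<in>?V. f z * (\<Sum>y\<in>?V. f (xorv z y) * Sfun n w y))"
  proof (rule sum.cong[OF refl])
    fix z assume z: "z \<in> ?V"
    show "f z * (\<Sum>z'\<in>?V. f z' * Sfun n w (xorv z z')) = f z * (\<Sum>y\<in>?V. f (xorv z y) * Sfun n w y)"
      using sum_xorv[OF z, of "\<lambda>z'. f z' * Sfun n w (xorv z z')"] by simp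
  qed
  finally show ?thesis .
qed


lemma mulvec_vecs: "mulvec k n G y \<in> vecs k" by (auto simp: mulvec_def vecs_def)

lemma fiber_bound:
  assumes Zs: "set_pmf Z \<subseteq> vecs n" and z: "z \<in> vecs n" and U: "U \<subseteq> vecs n"
  shows "(\<Sum>y\<in>U. pmf Z (xorv z y)) \<le> real (card U) / 2 ^ k + 2 * tv_uniform k (map_pmf (mulvec k n G) Z)"
proof -
  let ?h = "mulvec k n G" and ?g = "pmf (map_pmf (mulvec k n G) Z)"
  define W where "W = xorv z ` U"
  have fU: "finite U" by (rule finite_subset[OF U]) simp
  have fW: "finite W" using fU W_def by simp
  have inj: "inj_on (xorv z) U" by (rule inj_on_inverseI[where g="xorv z"]) simp
  have "(\<Sum>y\<in>U. pmf Z (xorv z y)) = sum (pmf Z) W"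
    unfolding W_def by (simp add: sum.reindex[OF inj])
  also have "\<dots> = measure_pmf.prob Z W" using fW by (simp add: measure_measure_pmf_finite)
  also have "\<dots> \<le> measure_pmf.prob Z (?h -` (?h ` W))"
    by (rule measure_pmf.finite_measure_mono) auto
  also have "\<dots> = measure_pmf.prob (map_pmf ?h Z) (?h ` W)" by (rule measure_map_pmf[symmetric])
  also have "\<dots> = sum ?g (?h ` W)" by (rule measure_measure_pmf_finite[OF finite_imageI[OF fW]])
  also have "\<dots> \<le> (\<Sum>s\<in>?h ` W. 1 / 2 ^ k + \<bar>?g s - 1 / 2 ^ k\<bar>)"
    by (rule sum_mono) linarith
  also have "\<dots> = real (card (?h ` W)) / 2 ^ k + (\<Sum>s\<in>?h ` W. \<bar>?g s - 1 / 2 ^ k\<bar>)"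
    by (simp add: sum.distrib)
  also have "\<dots> \<le> real (card U) / 2 ^ k + (\<Sum>s\<in>vecs k. \<bar>?g s - 1 / 2 ^ k\<bar>)"
  proof (rule add_mono)
    have "card (?h ` W) \<le> card W" by (rule card_image_le[OF fW])
    also have "card W \<le> card U" unfolding W_def by (rule card_image_le[OF fU])
    finally show "real (card (?h ` W)) / 2 ^ k \<le> real (card U) / 2 ^ k"
      by (simp add: divide_right_mono)
    show "(\<Sum>s\<in>?h ` W. \<bar>?g s - 1 / 2 ^ k\<bar>) \<le> (\<Sum>s\<in>vecs k. \<bar>?g s - 1 / 2 ^ k\<bar>)"
      by (rule sum_mono2) (auto simp: mulvec_vecs)
  qed
  also have "\<dots> = real (card U) / 2 ^ k + 2 * tv_uniform k (map_pmf ?h Z)"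
    by (simp add: tv_uniform_def)
  finally show ?thesis .
qed


lemma card_ball: "card {y \<in> vecs n. hweight n y \<le> t} = hamming_ball_vol n t"
proof -
  let ?U = "{y \<in> vecs n. hweight n y \<le> t}"
  have fU: "finite ?U" by simp
  have "card ?U = (\<Sum>y\<in>?U. 1)" by simp
  also have "\<dots> = (\<Sum>j\<in>{0..t}. \<Sum>y\<in>{y. y \<in> ?U \<and> hweight n y = j}. 1)"
    by (rule sum.group[symmetric, OF fU]) auto
  also have "\<dots> = (\<Sum>j\<in>{0..t}. n choose j)"
  proof (rule sum.cong[OF refl])
    fix j assume "j \<in> {0..t}"
    then have "{y. y \<in> ?U \<and> hweight n y = j} = {e \<in> vecs n. hweight n e = j}" by auto
    then show "(\<Sum>y\<in>{y. y \<in> ?U \<and> hweight n y = j}. 1) = n choose j" by (simp add: card_weight)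
  qed
  finally show ?thesis by (simp add: hamming_ball_vol_def)
qed

lemma card_U:
  "card {y \<in> vecs n. hweight n y \<le> t \<or> n - hweight n y \<le> t} \<le> 2 * hamming_ball_vol n t"
proof -
  let ?U1 = "{y \<in> vecs n. hweight n y \<le> t}" and ?U2 = "{y \<in> vecs n. n - hweight n y \<le> t}"
  have eq: "{y \<in> vecs n. hweight n y \<le> t \<or> n - hweight n y \<le> t} = ?U1 \<union> ?U2" by auto
  have sub: "?U2 \<subseteq> complv n ` ?U1"
  proof
    fix y assume y: "y \<in> ?U2"
    then have "y = complv n (complv n y)" by (simp add: complv_complv)
    moreover have "complv n y \<in> ?U1" using y by (simp add: complv_vecs hweight_complv)
    ultimately show "y \<in> complv n ` ?U1" by blast
  qed
  have "card ?U2 \<le> card (complv n ` ?U1)" by (rule card_mono[OF _ sub]) simp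
  also have "\<dots> \<le> card ?U1" by (rule card_image_le) simp
  finally have "card ?U2 \<le> card ?U1" .
  then have "card (?U1 \<union> ?U2) \<le> 2 * card ?U1" using card_Un_le[of ?U1 ?U2] by linarith
  then show ?thesis unfolding eq card_ball .
qed

lemma mulvec_xorv: "mulvec k n G (xorv u v) = xorv (mulvec k n G u) (mulvec k n G v)"
proof -
  have "par n (\<lambda>i. G j i \<and> xorv u v i) = (par n (\<lambda>i. G j i \<and> u i) \<noteq> par n (\<lambda>i. G j i \<and> v i))" for j
  proof -
    have "par n (\<lambda>i. G j i \<and> xorv u v i) = par n (\<lambda>i. (G j i \<and> u i) \<noteq> (G j i \<and> v i))"
      by (rule par_cong) (auto simp: xorv_def)
    then show ?thesis by (simp only: par_xor)
  qed
  then show ?thesis by (auto simp: mulvec_def xorv_def par_def fun_eq_iff)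
qed

lemma card_dual:
  "2 ^ n \<le> card (dual_code n (gen_code k n G)) * 2 ^ k"
proof -
  let ?V = "vecs n" and ?h = "mulvec k n G"
  let ?K = "{y \<in> ?V. ?h y = (\<lambda>_. False)}"
  have Ksub: "?K \<subseteq> dual_code n (gen_code k n G)"
  proof
    fix y assume y: "y \<in> ?K"
    have "\<not> ip n c y" if cC: "c \<in> gen_code k n G" for c
    proof -
      obtain x where "c = vecmul k n x G" using cC unfolding gen_code_def by blast
      then have "ip n c y = ip k x (\<lambda>_. False)" using y by (simp add: ip_swap)
      then show ?thesis by (simp add: ip_par)
    qed
    then show "y \<in> dual_code n (gen_code k n G)" using y by (simp add: dual_code_def)
  qed
  have fib: "card {v \<in> ?V. ?h v = s} \<le> card ?K" if s: "s \<in> ?h ` ?V" for s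
  proof -
    obtain v0 where v0: "v0 \<in> ?V" "?h v0 = s" using s by blast
    have "card {v \<in> ?V. ?h v = s} = card (xorv v0 ` {v \<in> ?V. ?h v = s})"
      by (rule card_image[symmetric]) (rule inj_on_inverseI[where g="xorv v0"], simp)
    also have "\<dots> \<le> card ?K"
    proof (rule card_mono)
      show "finite ?K" by simp
      show "xorv v0 ` {v \<in> ?V. ?h v = s} \<subseteq> ?K"
      proof
        fix u assume "u \<in> xorv v0 ` {v \<in> ?V. ?h v = s}"
        then obtain v where v: "v \<in> ?V" "?h v = s" "u = xorv v0 v" by blast
        have "?h u = xorv (?h v0) (?h v)" using v by (simp add: mulvec_xorv)
        also have "\<dots> = (\<lambda>_. False)" using v v0 by (simp add: xorv_def)
        finally show "u \<in> ?K" using v v0 by (simp add: xorv_vecs)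
      qed
    qed
    finally show ?thesis .
  qed
  have "2 ^ n = card ?V" by (simp add: card_vecs)
  also have "\<dots> = (\<Sum>v\<in>?V. 1)" by simp
  also have "\<dots> = (\<Sum>s\<in>?h ` ?V. \<Sum>v\<in>{v. v \<in> ?V \<and> ?h v = s}. 1)"
    by (rule sum.group[symmetric]) auto
  also have "\<dots> = (\<Sum>s\<in>?h ` ?V. card {v \<in> ?V. ?h v = s})" by simp
  also have "\<dots> \<le> (\<Sum>s\<in>?h ` ?V. card ?K)" by (rule sum_mono) (rule fib)
  also have "\<dots> = card (?h ` ?V) * card ?K" by simp
  also have "\<dots> \<le> 2 ^ k * card (dual_code n (gen_code k n G))"
  proof (rule mult_mono)
    have "card (?h ` ?V) \<le> card (vecs k)" by (rule card_mono) (auto simp: mulvec_vecs)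
    then show "card (?h ` ?V) \<le> 2 ^ k" by (simp add: card_vecs)
    show "card ?K \<le> card (dual_code n (gen_code k n G))"
    proof (rule card_mono[OF _ Ksub])
      show "finite (dual_code n (gen_code k n G))"
        by (rule finite_subset[of _ "vecs n"]) (auto simp: dual_code_def)
    qed
  qed auto
  finally show ?thesis by (simp add: mult.commute)
qed

lemma per_z:
  fixes D :: real
  assumes Zs: "set_pmf Z \<subseteq> vecs n" and z: "z \<in> vecs n" and D: "D \<ge> 0"
    and SB: "\<And>y. y \<in> vecs n \<Longrightarrow> t \<le> hweight n y \<Longrightarrow> t \<le> n - hweight n y \<Longrightarrow> \<bar>Sfun n w y\<bar> \<le> D"
  shows "(\<Sum>y\<in>vecs n. pmf Z (xorv z y) * Sfun n w y)
     \<le> real (n choose w) * (2 * real (hamming_ball_vol n t) / 2 ^ k + 2 * tv_uniform k (map_pmf (mulvec k n G) Z)) + D"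
proof -
  let ?V = "vecs n" and ?B = "real (n choose w)"
  let ?P = "\<lambda>y. hweight n y \<le> t \<or> n - hweight n y \<le> t"
  let ?U = "{y \<in> ?V. ?P y}"
  let ?f = "\<lambda>y. pmf Z (xorv z y)"
  have pt: "?f y * Sfun n w y \<le> ?B * (if ?P y then ?f y else 0) + D * ?f y" if y: "y \<in> ?V" for y
  proof (cases "?P y")
    case True
    have "?f y * Sfun n w y \<le> ?f y * ?B"
      using Sfun_abs_le[of n w y] by (intro mult_left_mono) (auto simp: pmf_nonneg)
    moreover have "0 \<le> D * ?f y" using D by (simp add: pmf_nonneg)
    ultimately show ?thesis using True by (simp add: mult.commute)
  next
    case False
    then have "\<bar>Sfun n w y\<bar> \<le> D" using SB[OF y] by auto
    then have "?f y * Sfun n w y \<le> ?f y * D" by (intro mult_left_mono) (auto simp: pmf_nonneg)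
    then show ?thesis using False by (simp add: mult.commute)
  qed
  have "(\<Sum>y\<in>?V. ?f y * Sfun n w y) \<le> (\<Sum>y\<in>?V. ?B * (if ?P y then ?f y else 0) + D * ?f y)"
    by (rule sum_mono) (rule pt)
  also have "\<dots> = ?B * (\<Sum>y\<in>?U. ?f y) + D * (\<Sum>y\<in>?V. ?f y)"
    by (simp add: sum.distrib sum_distrib_left[symmetric] sum.inter_filter)
  also have "(\<Sum>y\<in>?V. ?f y) = 1" using sum_xorv[OF z, of "pmf Z"] Zs by (simp add: sum_pmf_eq_1)
  also have "(\<Sum>y\<in>?U. ?f y) \<le> 2 * real (hamming_ball_vol n t) / 2 ^ k + 2 * tv_uniform k (map_pmf (mulvec k n G) Z)"
  proof -
    have "(\<Sum>y\<in>?U. ?f y) \<le> real (card ?U) / 2 ^ k + 2 * tv_uniform k (map_pmf (mulvec k n G) Z)"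
      by (rule fiber_bound[OF Zs z]) auto
    moreover have "real (card ?U) / 2 ^ k \<le> 2 * real (hamming_ball_vol n t) / 2 ^ k"
      using card_U[of n t] by (intro divide_right_mono) (simp_all add: of_nat_mono[where 'a=real, of _ "2 * _", simplified])
    ultimately show ?thesis by linarith
  qed
  then have "?B * (\<Sum>y\<in>?U. ?f y) \<le> ?B * (2 * real (hamming_ball_vol n t) / 2 ^ k + 2 * tv_uniform k (map_pmf (mulvec k n G) Z))"
    by (intro mult_left_mono) auto
  finally show ?thesis by simp
qed

lemma sqrt3: "0 \<le> a \<Longrightarrow> 0 \<le> b \<Longrightarrow> 0 \<le> c \<Longrightarrow> sqrt (a + b + c) \<le> sqrt a + sqrt b + sqrt c"
  by (meson add_nonneg_nonneg add_mono order.trans order_refl sqrt_add_le_add_sqrt)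

lemma main_gen:
  fixes c CC :: real and n k w t :: nat and G :: "nat \<Rightarrow> nat \<Rightarrow> bool"
    and \<epsilon> :: real and Z :: "(nat \<Rightarrow> bool) pmf"
  assumes c: "0 < c" "c < 1" and CC: "CC \<ge> 1"
    and kraw: "\<And>m w' i. m \<ge> 1 \<Longrightarrow> real w' \<le> c * real m \<Longrightarrow> 2 * i \<le> m \<Longrightarrow>
       \<bar>real_of_int (krawtchouk m w' i)\<bar> \<le> CC * real (m choose w') * (1 - 2 * real w' / real m) ^ i"
    and k: "1 \<le> k" "k \<le> n - 1"
    and w: "real w \<le> c * real n"
    and eps: "\<epsilon> > 0"
    and Zsupp: "set_pmf Z \<subseteq> vecs n"
    and TV: "tv_uniform k (map_pmf (mulvec k n G) Z) \<le> \<epsilon>"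
  shows "(1 / real (n choose w)) *
            (\<Sum>e\<in>{e\<in>vecs n. hweight n e = w}. \<bar>bias Z (ip n e)\<bar>)
          \<le> sqrt (real (card (dual_code n (gen_code k n G))) * real (hamming_ball_vol n t) / 2 ^ (n + 1))
             + sqrt (CC * real n) / 2 * sqrt (\<bar>1 - 2 * real w / real n\<bar> ^ t)
             + sqrt (\<epsilon> / 2)"
proof -
  let ?V = "vecs n" and ?E = "{e\<in>vecs n. hweight n e = w}"
  define B where "B = real (n choose w)"
  define x where "x = \<bar>1 - 2 * real w / real n\<bar>"
  define D where "D = CC * B * x ^ t"
  define tv where "tv = tv_uniform k (map_pmf (mulvec k n G) Z)"
  define VB where "VB = real (hamming_ball_vol n t)"
  define cd where "cd = real (card (dual_code n (gen_code k n G)))"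
  define F where "F e = (\<Sum>z\<in>?V. pmf Z z * chi n e z)" for e
  have n1: "n \<ge> 1" using k by linarith
  have wn: "w \<le> n"
  proof -
    have "real w \<le> real n" using w c n1 by (smt (verit) mult_left_le_one_le of_nat_0_le_iff)
    then show ?thesis by simp
  qed
  have Bpos: "B > 0" unfolding B_def using wn by simp
  have x0: "x \<ge> 0" unfolding x_def by simp
  have D0: "D \<ge> 0" unfolding D_def using CC Bpos x0 by simp
  have SB: "\<bar>Sfun n w y\<bar> \<le> D" if "y \<in> ?V" "t \<le> hweight n y" "t \<le> n - hweight n y" for y
    unfolding D_def B_def x_def
    by (rule Sfun_bound[OF _ n1 wn that]) (use kraw[OF n1 w] CC in auto)
  define M where "M = B * (2 * VB / 2 ^ k + 2 * tv) + D"
  have bias_eq: "bias Z (ip n e) = F e / 2" for e using bias_formula[OF Zsupp, of e] by (simp add: F_def)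
  have Q: "(\<Sum>e\<in>?E. (F e)\<^sup>2) \<le> M"
  proof -
    have "(\<Sum>e\<in>?E. (F e)\<^sup>2) = (\<Sum>z\<in>?V. pmf Z z * (\<Sum>y\<in>?V. pmf Z (xorv z y) * Sfun n w y))"
      unfolding F_def by (rule square_expand) simp
    also have "\<dots> \<le> (\<Sum>z\<in>?V. pmf Z z * M)"
    proof (rule sum_mono)
      fix z assume z: "z \<in> ?V"
      show "pmf Z z * (\<Sum>y\<in>?V. pmf Z (xorv z y) * Sfun n w y) \<le> pmf Z z * M"
        unfolding M_def B_def VB_def tv_def
        by (rule mult_left_mono[OF per_z[OF Zsupp z D0 SB]]) (auto simp: pmf_nonneg)
    qed
    also have "\<dots> = M" using Zsupp by (simp add: sum_distrib_right[symmetric] sum_pmf_eq_1)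
    finally show ?thesis .
  qed
  define S where "S = (\<Sum>e\<in>?E. \<bar>bias Z (ip n e)\<bar>)"
  have S0: "S \<ge> 0" unfolding S_def by (simp add: sum_nonneg)
  have CS: "S\<^sup>2 \<le> (\<Sum>e\<in>?E. \<bar>bias Z (ip n e)\<bar>\<^sup>2) * B"
    using Cauchy_Schwarz_ineq_sum[of "\<lambda>e. \<bar>bias Z (ip n e)\<bar>" "\<lambda>_. 1" ?E]
    by (simp add: S_def B_def card_weight)
  have "(\<Sum>e\<in>?E. \<bar>bias Z (ip n e)\<bar>\<^sup>2) = (\<Sum>e\<in>?E. (F e)\<^sup>2) / 4"
    by (simp add: bias_eq power_divide sum_divide_distrib)
  then have "S\<^sup>2 \<le> ((\<Sum>e\<in>?E. (F e)\<^sup>2) / 4) * B" using CS by (simp only: power2_abs)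
  also have "\<dots> \<le> (M / 4) * B" using Q Bpos by (intro mult_right_mono divide_right_mono) auto
  finally have S2: "S\<^sup>2 \<le> M * B / 4" by simp
  define L where "L = (1 / B) * S"
  have L0: "L \<ge> 0" unfolding L_def using S0 Bpos by simp
  have "L\<^sup>2 = S\<^sup>2 / B\<^sup>2" unfolding L_def by (simp add: power_divide)
  also have "\<dots> \<le> (M * B / 4) / B\<^sup>2" using S2 Bpos by (intro divide_right_mono) auto
  also have "\<dots> = VB / 2 ^ (k + 1) + tv / 2 + CC * x ^ t / 4"
    unfolding M_def D_def using Bpos by (simp add: field_simps power2_eq_square)
  also have "\<dots> \<le> VB / 2 ^ (k + 1) + \<epsilon> / 2 + CC * x ^ t / 4" using TV tv_def by simp
  finally have L2: "L\<^sup>2 \<le> VB / 2 ^ (k + 1) + \<epsilon> / 2 + CC * x ^ t / 4" .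
  have VB0: "VB \<ge> 0" unfolding VB_def by simp
  have "L \<le> sqrt (VB / 2 ^ (k + 1) + \<epsilon> / 2 + CC * x ^ t / 4)" using L2 by (rule real_le_rsqrt)
  also have "\<dots> \<le> sqrt (VB / 2 ^ (k + 1)) + sqrt (\<epsilon> / 2) + sqrt (CC * x ^ t / 4)"
    by (rule sqrt3) (use VB0 eps CC x0 in auto)
  also have "sqrt (VB / 2 ^ (k + 1)) \<le> sqrt (cd * VB / 2 ^ (n + 1))"
  proof (rule real_sqrt_le_mono)
    have "real (2 ^ n) \<le> real (card (dual_code n (gen_code k n G)) * 2 ^ k)"
      using card_dual[of n k G] by (rule of_nat_mono)
    then have cdn: "2 ^ n \<le> cd * 2 ^ k" unfolding cd_def by simp
    have "VB / 2 ^ (k + 1) = VB * 2 ^ n / (2 ^ (n + 1) * 2 ^ k)" by (simp add: power_add field_simps)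
    also have "\<dots> \<le> VB * (cd * 2 ^ k) / (2 ^ (n + 1) * 2 ^ k)"
      using cdn VB0 by (intro divide_right_mono mult_left_mono) auto
    also have "\<dots> = cd * VB / 2 ^ (n + 1)" by (simp add: field_simps)
    finally show "VB / 2 ^ (k + 1) \<le> cd * VB / 2 ^ (n + 1)" .
  qed
  also have "sqrt (CC * x ^ t / 4) \<le> sqrt (CC * real n) / 2 * sqrt (x ^ t)"
  proof -
    have "sqrt (CC * x ^ t / 4) = sqrt CC * sqrt (x ^ t) / 2" by (simp add: real_sqrt_mult real_sqrt_divide)
    also have "\<dots> \<le> sqrt (CC * real n) * sqrt (x ^ t) / 2"
      using n1 CC x0 by (intro divide_right_mono mult_right_mono real_sqrt_le_mono) auto
    finally show ?thesis by simp
  qed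
  finally show ?thesis unfolding L_def S_def B_def cd_def VB_def x_def by linarith
qed


theorem mainTheorem5:
  fixes c CC :: real and n k w :: nat and G :: "nat \<Rightarrow> nat \<Rightarrow> bool"
    and \<epsilon> :: real and Z :: "(nat \<Rightarrow> bool) pmf"
  assumes c: "0 < c" "c < 1" and CC: "CC \<ge> 1"
    and kraw: "\<And>m w' i. m \<ge> 1 \<Longrightarrow> real w' \<le> c * real m \<Longrightarrow> 2 * i \<le> m \<Longrightarrow>
       \<bar>real_of_int (krawtchouk m w' i)\<bar> \<le> CC * real (m choose w') * (1 - 2 * real w' / real m) ^ i"
    and k: "1 \<le> k" "k \<le> n - 1"
    and G: "rank_k k n G"
    and w: "real w \<le> c * real n"
    and eps: "\<epsilon> > 0"
    and Zsupp: "set_pmf Z \<subseteq> vecs n"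
    and TV: "tv_uniform k (map_pmf (mulvec k n G) Z) \<le> \<epsilon>"
  shows "(let Cd = gen_code k n G; dperp = min_dist n (dual_code n Cd);
              t = (dperp - 1) div 2 in
          (1 / real (n choose w)) *
            (\<Sum>e\<in>{e\<in>vecs n. hweight n e = w}. \<bar>bias Z (ip n e)\<bar>)
          \<le> sqrt (real (card (dual_code n Cd)) * real (hamming_ball_vol n t) / 2 ^ (n + 1))
             + sqrt (CC * real n) / 2 * sqrt (\<bar>1 - 2 * real w / real n\<bar> ^ t)
             + sqrt (\<epsilon> / 2))"
    unfolding Let_def by (rule main_gen[OF c CC kraw k w eps Zsupp TV])

end
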